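(* Let $K$ be a finite simplicial complex equipped with two assignments of edge lengths, giving discrete geodesic distance functions $f^1_p$ and $f^2_p$ for each vertex $p$ of $K$, and let $\epsilon=\max_{p\in\mathrm{Vert}(K)}\max_{q\in\mathrm{Vert}(K)}|f^1_p(q)-f^2_p(q)|$. Then for every homology class $h\in H_d(K;\mathbb{Z}_2)$, $|S^1(h)-S^2(h)|\le\epsilon$, where $S^1,S^2$ denote the size of $h$ computed with respect to $f^1$ and $f^2$ respectively.
   Context: For a given edge-length assignment, $f_p(q)$ is the length of a shortest path from vertex $p$ to vertex $q$ in the 1-skeleton of $K$, extended to simplices by $f_p(\sigma)=\max_{q\in\mathrm{Vert}(\sigma)}f_p(q)$. The geodesic ball $B_p^t=\{\sigma\in K: f_p(\sigma)\le t\}$ is a subcomplex; it carries a class $h$ if it contains some cycle representing $h$ (over $\mathbb{Z}_2$). $r_{f_p}(h)$ is the smallest $t$ such that $B_p^t$ carries $h$, and the size of $h$ is $S(h)=\min_{p\in\mathrm{Vert}(K)}r_{f_p}(h)$. *)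

theory Defs
  imports Main "HOL-Library.Multiset" Complex_Main
begin

definition simplicial_complex :: "'a set set \<Rightarrow> bool" where
  "simplicial_complex K \<longleftrightarrow> finite K \<and>
     (\<forall>\<sigma>\<in>K. finite \<sigma> \<and> \<sigma> \<noteq> {} \<and> (\<forall>\<tau>. \<tau> \<subseteq> \<sigma> \<and> \<tau> \<noteq> {} \<longrightarrow> \<tau> \<in> K))"

definition Vert :: "'a set set \<Rightarrow> 'a set" where
  "Vert K = \<Union>K"

definition simplices :: "'a set set \<Rightarrow> nat \<Rightarrow> 'a set set" where
  "simplices K d = {\<sigma>\<in>K. card \<sigma> = Suc d}"

text \<open>A Z/2 d-chain is a set of d-simplices; addition is symmetric difference.\<close>

definition chains :: "'a set set \<Rightarrow> nat \<Rightarrow> 'a set set set" where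
  "chains K d = Pow (simplices K d)"

definition sym_diff :: "'b set \<Rightarrow> 'b set \<Rightarrow> 'b set" where
  "sym_diff A B = (A - B) \<union> (B - A)"

text \<open>Boundary of a d-chain: the codimension-one faces occurring an odd number of
times (empty for d = 0, since the empty set is not a simplex).\<close>
definition bdry :: "'a set set \<Rightarrow> nat \<Rightarrow> 'a set set \<Rightarrow> 'a set set" where
  "bdry K d c = {\<tau>\<in>K. card \<tau> = d \<and> odd (card {\<sigma>\<in>c. \<tau> \<subseteq> \<sigma>})}"

definition cycles :: "'a set set \<Rightarrow> nat \<Rightarrow> 'a set set set" where
  "cycles K d = {c\<in>chains K d. bdry K d c = {}}"

definition boundaries :: "'a set set \<Rightarrow> nat \<Rightarrow> 'a set set set" where
  "boundaries K d = bdry K (Suc d) ` chains K (Suc d)"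

definition hclass :: "'a set set \<Rightarrow> nat \<Rightarrow> 'a set set \<Rightarrow> 'a set set set" where
  "hclass K d z = {z'\<in>cycles K d. sym_diff z z' \<in> boundaries K d}"

definition homology :: "'a set set \<Rightarrow> nat \<Rightarrow> 'a set set set set" where
  "homology K d = hclass K d ` cycles K d"

definition walk :: "'a set set \<Rightarrow> 'a list \<Rightarrow> bool" where
  "walk K xs \<longleftrightarrow> xs \<noteq> [] \<and> set xs \<subseteq> Vert K \<and>
     (\<forall>i. Suc i < length xs \<longrightarrow> {xs ! i, xs ! Suc i} \<in> simplices K 1)"

definition walk_len :: "('a set \<Rightarrow> real) \<Rightarrow> 'a list \<Rightarrow> real" where
  "walk_len w xs = (\<Sum>i<length xs - 1. w {xs ! i, xs ! Suc i})"

definition edge_lengths :: "'a set set \<Rightarrow> ('a set \<Rightarrow> real) \<Rightarrow> bool" where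
  "edge_lengths K w \<longleftrightarrow> (\<forall>e\<in>simplices K 1. 0 \<le> w e)"

definition connected_1skel :: "'a set set \<Rightarrow> bool" where
  "connected_1skel K \<longleftrightarrow> (\<forall>p\<in>Vert K. \<forall>q\<in>Vert K. \<exists>xs. walk K xs \<and> hd xs = p \<and> last xs = q)"

definition geod :: "'a set set \<Rightarrow> ('a set \<Rightarrow> real) \<Rightarrow> 'a \<Rightarrow> 'a \<Rightarrow> real" where
  "geod K w p q = Inf {walk_len w xs | xs. walk K xs \<and> hd xs = p \<and> last xs = q}"

definition geod_simplex :: "'a set set \<Rightarrow> ('a set \<Rightarrow> real) \<Rightarrow> 'a \<Rightarrow> 'a set \<Rightarrow> real" where
  "geod_simplex K w p \<sigma> = Max (geod K w p ` \<sigma>)"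

definition geod_ball :: "'a set set \<Rightarrow> ('a set \<Rightarrow> real) \<Rightarrow> 'a \<Rightarrow> real \<Rightarrow> 'a set set" where
  "geod_ball K w p t = {\<sigma>\<in>K. geod_simplex K w p \<sigma> \<le> t}"

definition carries :: "'a set set \<Rightarrow> 'a set set set \<Rightarrow> bool" where
  "carries B h \<longleftrightarrow> (\<exists>c\<in>h. c \<subseteq> B)"

definition radius :: "'a set set \<Rightarrow> ('a set \<Rightarrow> real) \<Rightarrow> 'a \<Rightarrow> 'a set set set \<Rightarrow> real" where
  "radius K w p h = Inf {t. 0 \<le> t \<and> carries (geod_ball K w p t) h}"

definition hsize :: "'a set set \<Rightarrow> ('a set \<Rightarrow> real) \<Rightarrow> 'a set set set \<Rightarrow> real" where
  "hsize K w h = Min ((\<lambda>p. radius K w p h) ` Vert K)"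

definition dist_eps :: "'a set set \<Rightarrow> ('a set \<Rightarrow> real) \<Rightarrow> ('a set \<Rightarrow> real) \<Rightarrow> real" where
  "dist_eps K w1 w2 = Max ((\<lambda>p. Max ((\<lambda>q. \<bar>geod K w1 p q - geod K w2 p q\<bar>) ` Vert K)) ` Vert K)"

end

theory Submission
  imports Defs
begin

lemma ball_mono:
  assumes sc: "simplicial_complex K" and p: "p \<in> Vert K"
    and le: "\<forall>q\<in>Vert K. geod K w1 p q \<le> geod K w2 p q + e"
  shows "geod_ball K w2 p t \<subseteq> geod_ball K w1 p (t + e)"
proof
  fix \<sigma> assume s: "\<sigma> \<in> geod_ball K w2 p t"
  hence sK: "\<sigma> \<in> K" and m: "Max (geod K w2 p ` \<sigma>) \<le> t"
    by (auto simp: geod_ball_def geod_simplex_def)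
  have fin: "finite \<sigma>" "\<sigma> \<noteq> {}" using sc sK by (auto simp: simplicial_complex_def)
  have sub: "\<sigma> \<subseteq> Vert K" using sK by (auto simp: Vert_def)
  have "\<forall>q\<in>\<sigma>. geod K w2 p q \<le> t" using m fin by (simp add: Max_le_iff)
  hence "\<forall>q\<in>\<sigma>. geod K w1 p q \<le> t + e" using le sub by (smt (verit) subsetD)
  hence "Max (geod K w1 p ` \<sigma>) \<le> t + e" using fin by (simp add: Max_le_iff)
  thus "\<sigma> \<in> geod_ball K w1 p (t + e)" using sK by (simp add: geod_ball_def geod_simplex_def)
qed

lemma carries_nonempty:
  assumes sc: "simplicial_complex K" and h: "h \<in> homology K d"
  shows "\<exists>t. 0 \<le> t \<and> carries (geod_ball K w p t) h"
proof -
  obtain z where z: "z \<in> cycles K d" and hz: "h = hclass K d z"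
    using h by (auto simp: homology_def)
  have "sym_diff z z = {}" by (simp add: sym_diff_def)
  moreover have "bdry K (Suc d) {} = {}" by (simp add: bdry_def)
  moreover have "{} \<in> chains K (Suc d)" by (simp add: chains_def)
  ultimately have "sym_diff z z \<in> boundaries K d"
    unfolding boundaries_def by (metis image_eqI)
  hence zh: "z \<in> h" using z hz by (simp add: hclass_def)
  have zK: "z \<subseteq> K" using z by (auto simp: cycles_def chains_def simplices_def)
  have finK: "finite K" using sc by (simp add: simplicial_complex_def)
  define T where "T = max 0 (if K = {} then 0 else Max (geod_simplex K w p ` K))"
  have "geod_simplex K w p \<sigma> \<le> T" if "\<sigma> \<in> K" for \<sigma>
  proof -
    have "geod_simplex K w p \<sigma> \<le> Max (geod_simplex K w p ` K)" using finK that by simp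
    thus ?thesis using that by (auto simp: T_def)
  qed
  hence "geod_ball K w p T = K" by (auto simp: geod_ball_def)
  hence "carries (geod_ball K w p T) h" using zh zK by (auto simp: carries_def)
  moreover have "0 \<le> T" by (simp add: T_def)
  ultimately show ?thesis by blast
qed

lemma radius_le:
  assumes sc: "simplicial_complex K" and p: "p \<in> Vert K" and h: "h \<in> homology K d"
    and le: "\<forall>q\<in>Vert K. geod K w1 p q \<le> geod K w2 p q + e" and e: "0 \<le> e"
  shows "radius K w1 p h \<le> radius K w2 p h + e"
proof -
  let ?S1 = "{t. 0 \<le> t \<and> carries (geod_ball K w1 p t) h}"
  let ?S2 = "{t. 0 \<le> t \<and> carries (geod_ball K w2 p t) h}"
  have ne: "?S2 \<noteq> {}" using carries_nonempty[OF sc h] by blast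
  have bd: "bdd_below ?S1" by (rule bdd_belowI[of _ 0]) auto
  have "\<forall>t\<in>?S2. Inf ?S1 \<le> t + e"
  proof
    fix t assume t: "t \<in> ?S2"
    have "t + e \<in> ?S1" using t ball_mono[OF sc p le, of t] e
      by (auto simp: carries_def)
    thus "Inf ?S1 \<le> t + e" using bd by (rule cInf_lower)
  qed
  hence "\<forall>t\<in>?S2. Inf ?S1 - e \<le> t" by auto
  hence "Inf ?S1 - e \<le> Inf ?S2" using ne by (intro cInf_greatest) auto
  thus ?thesis by (simp add: radius_def)
qed

lemma hsize_le:
  assumes sc: "simplicial_complex K" and ne: "K \<noteq> {}" and h: "h \<in> homology K d"
    and le: "\<forall>p\<in>Vert K. \<forall>q\<in>Vert K. geod K w1 p q \<le> geod K w2 p q + e" and e: "0 \<le> e"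
  shows "hsize K w1 h \<le> hsize K w2 h + e"
proof -
  have finV: "finite (Vert K)" using sc by (auto simp: simplicial_complex_def Vert_def)
  have neV: "Vert K \<noteq> {}" using sc ne by (auto simp: simplicial_complex_def Vert_def)
  have "hsize K w2 h \<in> (\<lambda>p. radius K w2 p h) ` Vert K"
    unfolding hsize_def using finV neV by (intro Min_in) auto
  then obtain p where p: "p \<in> Vert K" and hp: "hsize K w2 h = radius K w2 p h" by blast
  have "hsize K w1 h \<le> radius K w1 p h" using finV p by (simp add: hsize_def)
  also have "\<dots> \<le> radius K w2 p h + e" using radius_le[OF sc p h _ e] le p by blast
  finally show ?thesis using hp by simp
qed

theorem theorem3p1:
  fixes K :: "'a set set" and w1 w2 :: "'a set \<Rightarrow> real" and d :: nat
    and h :: "'a set set set"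
  assumes "simplicial_complex K" and "K \<noteq> {}"
    and "connected_1skel K"
    and "edge_lengths K w1" and "edge_lengths K w2"
    and "h \<in> homology K d"
  shows "\<bar>hsize K w1 h - hsize K w2 h\<bar> \<le> dist_eps K w1 w2"
proof -
  have finV: "finite (Vert K)" using assms(1) by (auto simp: simplicial_complex_def Vert_def)
  have neV: "Vert K \<noteq> {}" using assms(1,2) by (auto simp: simplicial_complex_def Vert_def)
  let ?e = "dist_eps K w1 w2"
  have bnd: "\<bar>geod K w1 p q - geod K w2 p q\<bar> \<le> ?e" if "p \<in> Vert K" "q \<in> Vert K" for p q
  proof -
    have "\<bar>geod K w1 p q - geod K w2 p q\<bar> \<le> Max ((\<lambda>q. \<bar>geod K w1 p q - geod K w2 p q\<bar>) ` Vert K)"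
      using finV that by simp
    also have "\<dots> \<le> ?e" unfolding dist_eps_def using finV that by simp
    finally show ?thesis .
  qed
  obtain p0 where p0: "p0 \<in> Vert K" using neV by blast
  have e: "0 \<le> ?e" using bnd[OF p0 p0] by linarith
  have a: "hsize K w1 h \<le> hsize K w2 h + ?e"
    by (rule hsize_le[OF assms(1,2,6) _ e]) (use bnd in fastforce)
  have b: "hsize K w2 h \<le> hsize K w1 h + ?e"
    by (rule hsize_le[OF assms(1,2,6) _ e]) (use bnd in fastforce)
  show ?thesis using a b by linarith
qed

end
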